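(* For a free $E$-linear code $C$ of length $2n$, $\mathrm{rank}(SHull(C))=\dim_{\mathbb{F}_2}(SHull(C_{Res}))$.
   Context: $E=\langle \kappa,\tau \mid 2\kappa=2\tau=0,\ \kappa^2=\kappa,\ \tau^2=\tau,\ \kappa\tau=\kappa,\ \tau\kappa=\tau\rangle$ is the non-unital ring $\{0,\kappa,\tau,\zeta\}$, $\zeta=\kappa+\tau$, with $e\kappa=e\tau=e$, $e\zeta=0$ for all $e\in E$. Every $e\in E$ is uniquely $u\kappa+v\zeta$ ($u,v\in\mathbb{F}_2$); $\pi(u\kappa+v\zeta)=u$, componentwise. An $E$-linear code of length $2n$ is a left $E$-submodule $C\subseteq E^{2n}$; $C_{Res}=\pi(C)$, $C_{Tor}=\{v\in\mathbb{F}_2^{2n}:\zeta v\in C\}$ (componentwise, $0\cdot\zeta=0,1\cdot\zeta=\zeta$); $C$ is free if $C_{Res}=C_{Tor}$. A finite set $X\subseteq E^{2n}$ generates $C$ if $C$ equals the union of the $E$-span $\{\sum e_jx_j:e_j\in E\}$ and the $\mathbb{F}_2$-span $\{\sum u_jx_j:u_j\in\mathbb{F}_2\}$ of $X$; the rank of a free code is the cardinality of a minimal generating set. Symplectic inner product (over $E$ or $\mathbb{F}_2$): $\langle (u|v),(u'|v')\rangle_s=\sum_i u_iv'_i+\sum_i v_iu'_i$. For binary $B$: $B^{\perp_S}=\{z:\langle z,w\rangle_s=0\ \forall w\in B\}$, $SHull(B)=B\cap B^{\perp_S}$. For $E$-linear $C$: $C^{\perp_S}=\{z\in E^{2n}:\langle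 z,w\rangle_s=\langle w,z\rangle_s=0\ \forall w\in C\}$, $SHull(C)=C\cap C^{\perp_S}$ (free whenever $C$ is free). *)

theory Defs
  imports Main "HOL-Library.Z2"
begin

datatype E = EZero | Kap | Tau | Zet

instantiation E :: comm_monoid_add
begin
definition zero_E :: E where "zero_E = EZero"
fun plus_E :: "E \<Rightarrow> E \<Rightarrow> E" where
  "plus_E EZero y = y"
| "plus_E x EZero = x"
| "plus_E Kap Kap = EZero"
| "plus_E Tau Tau = EZero"
| "plus_E Zet Zet = EZero"
| "plus_E Kap Tau = Zet"
| "plus_E Tau Kap = Zet"
| "plus_E Kap Zet = Tau"
| "plus_E Zet Kap = Tau"
| "plus_E Tau Zet = Kap"
| "plus_E Zet Tau = Kap"
instance
proof
  fix a b c :: E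
  show "a + b + c = a + (b + c)" by (cases a; cases b; cases c) simp_all
  show "a + b = b + a" by (cases a; cases b) simp_all
  show "0 + a = a" by (simp add: zero_E_def)
qed
end

instantiation E :: times
begin
fun times_E :: "E \<Rightarrow> E \<Rightarrow> E" where
  "times_E x Kap = x"
| "times_E x Tau = x"
| "times_E x Zet = EZero"
| "times_E x EZero = EZero"
instance ..
end

text \<open>pi(u kappa + v zeta) = u; zeta-embedding of F2 into E.\<close>
fun piE :: "E \<Rightarrow> bit" where
  "piE EZero = 0" | "piE Kap = 1" | "piE Tau = 1" | "piE Zet = 0"

definition zetaB :: "bit \<Rightarrow> E" where
  "zetaB b = (if b = 1 then Zet else EZero)"

section \<open>Vectors of length 2n, indexed 0..<2n (u-part: i<n, v-part: n+i)\<close>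

definition Evecs :: "nat \<Rightarrow> (nat \<Rightarrow> E) set" where
  "Evecs n = {x. \<forall>i\<ge>2*n. x i = 0}"

definition Bvecs :: "nat \<Rightarrow> (nat \<Rightarrow> bit) set" where
  "Bvecs n = {x. \<forall>i\<ge>2*n. x i = 0}"

definition sympE :: "nat \<Rightarrow> (nat \<Rightarrow> E) \<Rightarrow> (nat \<Rightarrow> E) \<Rightarrow> E" where
  "sympE n x y = (\<Sum>i<n. x i * y (n+i)) + (\<Sum>i<n. x (n+i) * y i)"

definition sympB :: "nat \<Rightarrow> (nat \<Rightarrow> bit) \<Rightarrow> (nat \<Rightarrow> bit) \<Rightarrow> bit" where
  "sympB n x y = (\<Sum>i<n. x i * y (n+i)) + (\<Sum>i<n. x (n+i) * y i)"

definition E_linear :: "nat \<Rightarrow> (nat \<Rightarrow> E) set \<Rightarrow> bool" where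
  "E_linear n C \<longleftrightarrow> C \<subseteq> Evecs n \<and> (\<lambda>i. 0) \<in> C
     \<and> (\<forall>x\<in>C. \<forall>y\<in>C. (\<lambda>i. x i + y i) \<in> C)
     \<and> (\<forall>e. \<forall>x\<in>C. (\<lambda>i. e * x i) \<in> C)"

definition Res :: "(nat \<Rightarrow> E) set \<Rightarrow> (nat \<Rightarrow> bit) set" where
  "Res C = (\<lambda>x. \<lambda>i. piE (x i)) ` C"

definition Tor :: "nat \<Rightarrow> (nat \<Rightarrow> E) set \<Rightarrow> (nat \<Rightarrow> bit) set" where
  "Tor n C = {v \<in> Bvecs n. (\<lambda>i. zetaB (v i)) \<in> C}"

definition free_code :: "nat \<Rightarrow> (nat \<Rightarrow> E) set \<Rightarrow> bool" where
  "free_code n C \<longleftrightarrow> Res C = Tor n C"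

definition E_span :: "(nat \<Rightarrow> E) set \<Rightarrow> (nat \<Rightarrow> E) set" where
  "E_span X = {(\<lambda>i. \<Sum>x\<in>X. c x * x i) | c. True}"

definition F2_span_E :: "(nat \<Rightarrow> E) set \<Rightarrow> (nat \<Rightarrow> E) set" where
  "F2_span_E X = {(\<lambda>i. \<Sum>x\<in>{x\<in>X. u x = (1::bit)}. x i) | u. True}"

definition generates :: "nat \<Rightarrow> (nat \<Rightarrow> E) set \<Rightarrow> (nat \<Rightarrow> E) set \<Rightarrow> bool" where
  "generates n X C \<longleftrightarrow> finite X \<and> X \<subseteq> Evecs n \<and> C = E_span X \<union> F2_span_E X"

definition rankE :: "nat \<Rightarrow> (nat \<Rightarrow> E) set \<Rightarrow> nat" where
  "rankE n C = (LEAST k. \<exists>X. generates n X C \<and> card X = k)"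

definition sperpE :: "nat \<Rightarrow> (nat \<Rightarrow> E) set \<Rightarrow> (nat \<Rightarrow> E) set" where
  "sperpE n C = {z \<in> Evecs n. \<forall>w\<in>C. sympE n z w = 0 \<and> sympE n w z = 0}"

definition SHullE :: "nat \<Rightarrow> (nat \<Rightarrow> E) set \<Rightarrow> (nat \<Rightarrow> E) set" where
  "SHullE n C = C \<inter> sperpE n C"

definition F2_span :: "(nat \<Rightarrow> bit) set \<Rightarrow> (nat \<Rightarrow> bit) set" where
  "F2_span X = {(\<lambda>i. \<Sum>x\<in>X. u x * x i) | u. True}"

definition dimF2 :: "(nat \<Rightarrow> bit) set \<Rightarrow> nat" where
  "dimF2 B = (LEAST k. \<exists>X. finite X \<and> X \<subseteq> B \<and> F2_span X = B \<and> card X = k)"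

definition sperpB :: "nat \<Rightarrow> (nat \<Rightarrow> bit) set \<Rightarrow> (nat \<Rightarrow> bit) set" where
  "sperpB n B = {z \<in> Bvecs n. \<forall>w\<in>B. sympB n z w = 0}"

definition SHullB :: "nat \<Rightarrow> (nat \<Rightarrow> bit) set \<Rightarrow> (nat \<Rightarrow> bit) set" where
  "SHullB n B = B \<inter> sperpB n B"

end

theory Submission
  imports Defs "HOL-Library.FuncSet"
begin

fun zp :: "E \<Rightarrow> bit" where
  "zp EZero = 0" | "zp Kap = 0" | "zp Tau = 1" | "zp Zet = 1"

lemma bit_cases2: "(b::bit) = 0 \<or> b = 1" by (cases "b = 0") auto

lemma piE_add: "piE (a + b) = piE a + piE b"
  by (cases a; cases b) simp_all
lemma zp_add: "zp (a + b) = zp a + zp b"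
  by (cases a; cases b) simp_all
lemma piE_zero[simp]: "piE 0 = 0" by (simp add: zero_E_def)
lemma zp_zero[simp]: "zp 0 = 0" by (simp add: zero_E_def)
lemma piE_mult: "piE (a * b) = piE a * piE b"
  by (cases a; cases b) simp_all
lemma zp_mult: "zp (a * b) = zp a * piE b"
  by (cases a; cases b) simp_all
lemma E_eqI: "piE a = piE b \<Longrightarrow> zp a = zp b \<Longrightarrow> a = b"
  by (cases a; cases b) simp_all
lemma E_zero_iff: "a = 0 \<longleftrightarrow> piE a = 0 \<and> zp a = 0"
  by (cases a) (simp_all add: zero_E_def)

lemma piE_sum: "piE (\<Sum>x\<in>S. f x) = (\<Sum>x\<in>S. piE (f x))"
  by (induction S rule: infinite_finite_induct) (simp_all add: piE_add)
lemma zp_sum: "zp (\<Sum>x\<in>S. f x) = (\<Sum>x\<in>S. zp (f x))"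
  by (induction S rule: infinite_finite_induct) (simp_all add: zp_add)

lemma piE_sympE: "piE (sympE n z w) = sympB n (\<lambda>i. piE (z i)) (\<lambda>i. piE (w i))"
  by (simp add: sympE_def sympB_def piE_add piE_sum piE_mult)
lemma zp_sympE: "zp (sympE n z w) = sympB n (\<lambda>i. zp (z i)) (\<lambda>i. piE (w i))"
  by (simp add: sympE_def sympB_def zp_add zp_sum zp_mult)

lemma sympB_comm: "sympB n a b = sympB n b a"
proof -
  have 1: "(\<Sum>i<n. a i * b (n+i)) = (\<Sum>i<n. b (n+i) * a i)"
    by (rule sum.cong[OF refl]) (rule mult.commute)
  have 2: "(\<Sum>i<n. a (n+i) * b i) = (\<Sum>i<n. b i * a (n+i))"
    by (rule sum.cong[OF refl]) (rule mult.commute)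
  show ?thesis unfolding sympB_def 1 2 by (rule add.commute)
qed
lemma sympB_add: "sympB n (\<lambda>i. a i + b i) r = sympB n a r + sympB n b r"
  unfolding sympB_def distrib_right sum.distrib by (simp only: add_ac)

lemma finite_Bvecs: "finite (Bvecs n)"
proof -
  have fu: "finite (UNIV :: bit set)"
  proof -
    have "(UNIV :: bit set) = {0,1}" using bit_cases2 by auto
    thus ?thesis by (metis finite.emptyI finite_insert)
  qed
  have "Bvecs n \<subseteq> (\<lambda>g i. if i < 2*n then g i else 0) ` (PiE {..<2*n} (\<lambda>_. UNIV))"
  proof
    fix x assume x: "x \<in> Bvecs n"
    have "x = (\<lambda>i. if i < 2*n then restrict x {..<2*n} i else 0)"
      using x by (auto simp: Bvecs_def fun_eq_iff restrict_def)
    moreover have "restrict x {..<2*n} \<in> PiE {..<2*n} (\<lambda>_. UNIV)" by simp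
    ultimately show "x \<in> (\<lambda>g i. if i < 2*n then g i else 0) ` (PiE {..<2*n} (\<lambda>_. UNIV))" by blast
  qed
  moreover have "finite (PiE {..<2*n} (\<lambda>_. (UNIV::bit set)))"
    by (rule finite_PiE) (simp_all add: fu)
  ultimately show ?thesis by (meson finite_imageI finite_subset)
qed


definition pv :: "(nat \<Rightarrow> E) \<Rightarrow> (nat \<Rightarrow> bit)" where "pv z = (\<lambda>i. piE (z i))"
definition zv :: "(nat \<Rightarrow> E) \<Rightarrow> (nat \<Rightarrow> bit)" where "zv z = (\<lambda>i. zp (z i))"
definition sub :: "(nat \<Rightarrow> bit) set \<Rightarrow> bool" where
  "sub V \<longleftrightarrow> (\<lambda>i. 0) \<in> V \<and> (\<forall>a\<in>V. \<forall>b\<in>V. (\<lambda>i. a i + b i) \<in> V)"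
definition subE :: "(nat \<Rightarrow> E) set \<Rightarrow> bool" where
  "subE V \<longleftrightarrow> (\<lambda>i. 0) \<in> V \<and> (\<forall>a\<in>V. \<forall>b\<in>V. (\<lambda>i. a i + b i) \<in> V)"
definition kemb :: "(nat \<Rightarrow> bit) \<Rightarrow> (nat \<Rightarrow> E)" where
  "kemb y = (\<lambda>i. if y i = 1 then Kap else 0)"
definition cmk :: "bit \<Rightarrow> bit \<Rightarrow> E" where
  "cmk a b = (if a = 1 then (if b = 1 then Tau else Kap) else (if b = 1 then Zet else 0))"

lemma piE_cmk[simp]: "piE (cmk a b) = a"
  using bit_cases2[of a] bit_cases2[of b] by (auto simp: cmk_def zero_E_def)
lemma zp_cmk[simp]: "zp (cmk a b) = b"
  using bit_cases2[of a] bit_cases2[of b] by (auto simp: cmk_def zero_E_def)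

lemma pv_kemb[simp]: "pv (kemb y) = y"
  unfolding pv_def kemb_def fun_eq_iff using bit_cases2 by auto
lemma zv_kemb[simp]: "zv (kemb y) = (\<lambda>i. 0)"
  unfolding zv_def kemb_def fun_eq_iff by (simp add: zero_E_def)
lemma inj_kemb: "inj kemb"
  by (metis injI pv_kemb)

lemma sum_in_sub:
  assumes "sub V" "\<forall>x\<in>S. f x \<in> V"
  shows "(\<lambda>i. \<Sum>x\<in>S. f x i) \<in> V"
  using assms(2)
proof (induction S rule: infinite_finite_induct)
  case (infinite A) then show ?case using assms(1) by (simp add: sub_def)
next
  case empty then show ?case using assms(1) by (simp add: sub_def)
next
  case (insert x F)
  then show ?case using assms(1) unfolding sub_def by simp
qed

lemma sum_in_subE:
  assumes "subE V" "\<forall>x\<in>S. f x \<in> V"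
  shows "(\<lambda>i. \<Sum>x\<in>S. f x i) \<in> V"
  using assms(2)
proof (induction S rule: infinite_finite_induct)
  case (infinite A) then show ?case using assms(1) by (simp add: subE_def)
next
  case empty then show ?case using assms(1) by (simp add: subE_def)
next
  case (insert x F)
  then show ?case using assms(1) unfolding subE_def by simp
qed

lemma smul_in: "sub V \<Longrightarrow> y \<in> V \<Longrightarrow> (\<lambda>i. (b::bit) * y i) \<in> V"
proof -
  assume V: "sub V" and y: "y \<in> V"
  consider "b = 0" | "b = 1" using bit_cases2 by blast
  then show ?thesis
  proof cases
    case 1
    then have "(\<lambda>i. b * y i) = (\<lambda>i. 0)" by simp
    then show ?thesis using V by (simp add: sub_def)
  next
    case 2
    then have "(\<lambda>i. b * y i) = y" by (simp only: mult_1_left)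
    then show ?thesis using y by simp
  qed
qed

lemma span_sub: "sub V \<Longrightarrow> X \<subseteq> V \<Longrightarrow> F2_span X \<subseteq> V"
proof
  fix z assume V: "sub V" and X: "X \<subseteq> V" and z: "z \<in> F2_span X"
  obtain u where zu: "z = (\<lambda>i. \<Sum>x\<in>X. u x * x i)" using z unfolding F2_span_def by blast
  have "\<forall>x\<in>X. (\<lambda>i. u x * x i) \<in> V" using smul_in[OF V] X by blast
  then show "z \<in> V" unfolding zu by (rule sum_in_sub[OF V])
qed

lemma F2_spanI: "x = (\<lambda>i. \<Sum>y\<in>X. u y * y i) \<Longrightarrow> x \<in> F2_span X"
  unfolding F2_span_def by blast

lemma in_span: "finite X \<Longrightarrow> x \<in> X \<Longrightarrow> x \<in> F2_span X"
proof -
  assume f: "finite X" and x: "x \<in> X"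
  have "\<And>i. (\<Sum>y\<in>X. (if y = x then 1 else 0) * y i) = (\<Sum>y\<in>X. (if y = x then y i else 0))"
    by (rule sum.cong[OF refl]) simp
  also have "\<And>i. (\<Sum>y\<in>X. (if y = x then y i else 0)) = x i"
    using f x by (simp add: sum.delta)
  finally have "x = (\<lambda>i. \<Sum>y\<in>X. (if y = x then 1 else 0) * y i)" by simp
  thus ?thesis by (rule F2_spanI)
qed

lemma sub_span: "sub (F2_span X)"
proof -
  have "(\<lambda>i. 0::bit) = (\<lambda>i. \<Sum>x\<in>X. (\<lambda>_. 0) x * x i)" by simp
  then have z: "(\<lambda>i. 0::bit) \<in> F2_span X" by (rule F2_spanI)
  have "(\<lambda>i. a i + b i) \<in> F2_span X" if ab: "a \<in> F2_span X" "b \<in> F2_span X" for a b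
  proof -
    obtain u v where "a = (\<lambda>i. \<Sum>x\<in>X. u x * x i)" "b = (\<lambda>i. \<Sum>x\<in>X. v x * x i)"
      using ab unfolding F2_span_def by blast
    then have "(\<lambda>i. a i + b i) = (\<lambda>i. \<Sum>x\<in>X. (u x + v x) * x i)"
      by (simp only: distrib_right sum.distrib)
    then show ?thesis by (rule F2_spanI)
  qed
  with z show ?thesis unfolding sub_def by blast
qed


lemma piE_kemb[simp]: "piE (kemb y i) = y i"
  unfolding kemb_def using bit_cases2[of "y i"] by (auto simp: zero_E_def)
lemma zp_kemb[simp]: "zp (kemb y i) = 0"
  unfolding kemb_def by (auto simp: zero_E_def)

lemma E_spanI: "x = (\<lambda>i. \<Sum>y\<in>X. c y * y i) \<Longrightarrow> x \<in> E_span X"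
  unfolding E_span_def by blast

lemma F2_span_EI: "x = (\<lambda>i. \<Sum>y\<in>{y\<in>X. u y = (1::bit)}. y i) \<Longrightarrow> x \<in> F2_span_E X"
  unfolding F2_span_E_def by blast

lemma rank_eq:
  assumes subH: "sub H" and HB: "H \<subseteq> Bvecs n" and D: "D = {z. pv z \<in> H \<and> zv z \<in> H}"
  shows "rankE n D = dimF2 H"
proof -
  have finH: "finite H" using finite_Bvecs HB finite_subset by blast
  have "F2_span H = H" using span_sub[OF subH] in_span[OF finH] by blast
  then have "\<exists>X. finite X \<and> X \<subseteq> H \<and> F2_span X = H \<and> card X = card H" using finH by blast
  then have "\<exists>X. finite X \<and> X \<subseteq> H \<and> F2_span X = H \<and> card X = dimF2 H"
    unfolding dimF2_def
    by (intro LeastI_ex[where P="\<lambda>k. \<exists>X. finite X \<and> X \<subseteq> H \<and> F2_span X = H \<and> card X = k"]) blast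
  then obtain Y where Yf: "finite Y" and YH: "Y \<subseteq> H" and Ysp: "F2_span Y = H"
    and Yc: "card Y = dimF2 H" by blast
  have z0: "(\<lambda>i. 0::bit) \<in> H" using subH by (simp add: sub_def)
  have Hadd: "\<And>a b. a \<in> H \<Longrightarrow> b \<in> H \<Longrightarrow> (\<lambda>i. a i + b i) \<in> H" using subH by (simp add: sub_def)
  have subD: "subE D"
    unfolding subE_def D pv_def zv_def using z0 Hadd by (simp add: piE_add zp_add)
  have DE: "z \<in> Evecs n" if "z \<in> D" for z
  proof -
    have "pv z \<in> Bvecs n" "zv z \<in> Bvecs n" using that D HB by auto
    then show ?thesis unfolding Evecs_def Bvecs_def pv_def zv_def using E_zero_iff by auto
  qed
  define X where "X = kemb ` Y"
  have XD: "X \<subseteq> D" unfolding X_def D using YH z0 by auto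
  have Xf: "finite X" unfolding X_def by (rule finite_imageI[OF Yf])
  have Xc: "card X = card Y" unfolding X_def by (rule card_image[OF inj_on_subset[OF inj_kemb subset_UNIV]])
  have gen: "generates n X D"
    unfolding generates_def
  proof (intro conjI)
    show "finite X" by (rule Xf)
    show "X \<subseteq> Evecs n" using XD DE by blast
    show "D = E_span X \<union> F2_span_E X"
    proof (intro equalityI subsetI)
      fix z assume "z \<in> E_span X \<union> F2_span_E X"
      then show "z \<in> D"
      proof
        assume "z \<in> E_span X"
        then obtain c where zc: "z = (\<lambda>i. \<Sum>x\<in>X. c x * x i)" unfolding E_span_def by blast
        have "(\<lambda>i. c x * x i) \<in> D" if xX: "x \<in> X" for x
        proof -
          obtain y where y: "y \<in> H" "x = kemb y" using xX YH unfolding X_def by blast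
          have "pv (\<lambda>i. c x * x i) = (\<lambda>i. piE (c x) * y i)" unfolding pv_def y(2) by (simp add: piE_mult)
          moreover have "zv (\<lambda>i. c x * x i) = (\<lambda>i. zp (c x) * y i)" unfolding zv_def y(2) by (simp add: zp_mult)
          ultimately show ?thesis unfolding D using smul_in[OF subH y(1)] by simp
        qed
        then show "z \<in> D" unfolding zc by (intro sum_in_subE[OF subD]) blast
      next
        assume "z \<in> F2_span_E X"
        then obtain u where zu: "z = (\<lambda>i. \<Sum>x\<in>{x\<in>X. u x = (1::bit)}. x i)" unfolding F2_span_E_def by blast
        show "z \<in> D" unfolding zu by (intro sum_in_subE[OF subD]) (use XD in blast)
      qed
    next
      fix z assume zD: "z \<in> D"
      then have "pv z \<in> F2_span Y" "zv z \<in> F2_span Y" using Ysp D by auto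
      then obtain u v where u: "pv z = (\<lambda>i. \<Sum>y\<in>Y. u y * y i)" and v: "zv z = (\<lambda>i. \<Sum>y\<in>Y. v y * y i)"
        unfolding F2_span_def by blast
      define c where "c x = cmk (u (pv x)) (v (pv x))" for x
      have "z = (\<lambda>i. \<Sum>x\<in>X. c x * x i)"
      proof
        fix i
        have "(\<Sum>x\<in>X. c x * x i) = (\<Sum>y\<in>Y. c (kemb y) * kemb y i)"
          unfolding X_def using sum.reindex[OF inj_on_subset[OF inj_kemb subset_UNIV], of "\<lambda>x. c x * x i" Y]
          by (simp only: comp_def)
        also have "\<dots> = (\<Sum>y\<in>Y. cmk (u y) (v y) * kemb y i)" unfolding c_def by simp
        finally have e: "(\<Sum>x\<in>X. c x * x i) = (\<Sum>y\<in>Y. cmk (u y) (v y) * kemb y i)" .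
        show "z i = (\<Sum>x\<in>X. c x * x i)" unfolding e
        proof (rule E_eqI)
          show "piE (z i) = piE (\<Sum>y\<in>Y. cmk (u y) (v y) * kemb y i)"
            using fun_cong[OF u, of i] unfolding pv_def by (simp add: piE_sum piE_mult)
          show "zp (z i) = zp (\<Sum>y\<in>Y. cmk (u y) (v y) * kemb y i)"
            using fun_cong[OF v, of i] unfolding zv_def by (simp add: zp_sum zp_mult)
        qed
      qed
      then show "z \<in> E_span X \<union> F2_span_E X" using E_spanI by blast
    qed
  qed
  have le1: "rankE n D \<le> dimF2 H"
    unfolding rankE_def using gen Xc Yc by (intro Least_le) auto
  have "\<exists>X. generates n X D \<and> card X = rankE n D"
    unfolding rankE_def
    by (intro LeastI_ex[where P="\<lambda>k. \<exists>X. generates n X D \<and> card X = k"]) (use gen in blast)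
  then obtain X' where g': "generates n X' D" and c': "card X' = rankE n D" by blast
  have X'f: "finite X'" and DX': "D = E_span X' \<union> F2_span_E X'" using g' unfolding generates_def by auto
  have X'D: "X' \<subseteq> D"
  proof
    fix x assume x: "x \<in> X'"
    define u where "u y = (if y = x then (1::bit) else 0)" for y
    have "{y \<in> X'. u y = 1} = {x}" using x by (auto simp: u_def)
    then have "x = (\<lambda>i. \<Sum>y\<in>{y \<in> X'. u y = 1}. y i)" by simp
    then have "x \<in> F2_span_E X'" by (rule F2_span_EI)
    then show "x \<in> D" using DX' by blast
  qed
  let ?P = "pv ` X'"
  have PH: "?P \<subseteq> H" using X'D D by auto
  have Pf: "finite ?P" using X'f by simp
  have inP: "pv x \<in> F2_span ?P" if "x \<in> X'" for x using in_span[OF Pf] that by blast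
  have "H \<subseteq> F2_span ?P"
  proof
    fix h assume h: "h \<in> H"
    have "kemb h \<in> D" unfolding D using h z0 by simp
    then have "kemb h \<in> E_span X' \<union> F2_span_E X'" using DX' by blast
    then have "pv (kemb h) \<in> F2_span ?P"
    proof
      assume "kemb h \<in> E_span X'"
      then obtain c where zc: "kemb h = (\<lambda>i. \<Sum>x\<in>X'. c x * x i)" unfolding E_span_def by blast
      have "pv (kemb h) = (\<lambda>i. \<Sum>x\<in>X'. (\<lambda>x i. piE (c x) * pv x i) x i)"
        unfolding zc pv_def by (simp add: piE_sum piE_mult)
      also have "\<dots> \<in> F2_span ?P"
        by (rule sum_in_sub[OF sub_span]) (use smul_in[OF sub_span] inP in blast)
      finally show ?thesis .
    next
      assume "kemb h \<in> F2_span_E X'"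
      then obtain u where zu: "kemb h = (\<lambda>i. \<Sum>x\<in>{x\<in>X'. u x = (1::bit)}. x i)" unfolding F2_span_E_def by blast
      have "pv (kemb h) = (\<lambda>i. \<Sum>x\<in>{x\<in>X'. u x = (1::bit)}. pv x i)"
        unfolding zu pv_def by (simp add: piE_sum)
      also have "\<dots> \<in> F2_span ?P"
        by (rule sum_in_sub[OF sub_span]) (use inP in blast)
      finally show ?thesis .
    qed
    then show "h \<in> F2_span ?P" by simp
  qed
  then have "F2_span ?P = H" using span_sub[OF subH PH] by blast
  then have "dimF2 H \<le> card ?P"
    unfolding dimF2_def using Pf PH by (intro Least_le) auto
  also have "\<dots> \<le> card X'" using X'f by (rule card_image_le)
  finally show ?thesis using le1 c' by simp
qed


lemma C_char:
  assumes lin: "E_linear n C" and fr: "free_code n C"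
  shows "C = {z. pv z \<in> Res C \<and> zv z \<in> Res C}"
proof (intro equalityI subsetI)
  have CE: "C \<subseteq> Evecs n" and add: "\<And>x y. x \<in> C \<Longrightarrow> y \<in> C \<Longrightarrow> (\<lambda>i. x i + y i) \<in> C"
    and sm: "\<And>e x. x \<in> C \<Longrightarrow> (\<lambda>i. e * x i) \<in> C"
    using lin unfolding E_linear_def by auto
  {
    fix z assume z: "z \<in> C"
    have p: "pv z \<in> Res C" unfolding Res_def pv_def using z by blast
    have w: "(\<lambda>i. z i + Kap * z i) \<in> C" using add[OF z sm[OF z]] .
    have "(\<lambda>i. z i + Kap * z i) = (\<lambda>i. zetaB (zv z i))"
    proof
      fix i show "z i + Kap * z i = zetaB (zv z i)"
        by (cases "z i") (simp_all add: zetaB_def zv_def zero_E_def)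
    qed
    with w have "(\<lambda>i. zetaB (zv z i)) \<in> C" by simp
    moreover have "zv z \<in> Bvecs n" using z CE unfolding Evecs_def Bvecs_def zv_def by auto
    ultimately have "zv z \<in> Tor n C" unfolding Tor_def by simp
    then have "zv z \<in> Res C" using fr unfolding free_code_def by simp
    with p show "z \<in> {z. pv z \<in> Res C \<and> zv z \<in> Res C}" by simp
  }
  fix z assume "z \<in> {z. pv z \<in> Res C \<and> zv z \<in> Res C}"
  then obtain w w' where w: "w \<in> C" "pv z = pv w" and w': "w' \<in> C" "zv z = pv w'"
    unfolding Res_def pv_def by auto
  have "(\<lambda>i. Kap * w i + Zet * w' i) \<in> C" using add[OF sm[OF w(1)] sm[OF w'(1)]] .
  moreover have "(\<lambda>i. Kap * w i + Zet * w' i) = z"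
  proof
    fix i
    have a: "piE (z i) = piE (w i)" "zp (z i) = piE (w' i)"
      using fun_cong[OF w(2), of i] fun_cong[OF w'(2), of i] unfolding pv_def zv_def by auto
    show "Kap * w i + Zet * w' i = z i"
      by (rule E_eqI) (simp_all add: piE_add piE_mult zp_add zp_mult a)
  qed
  ultimately show "z \<in> C" by simp
qed

lemma shull_char:
  assumes lin: "E_linear n C" and fr: "free_code n C"
  shows "SHullE n C = {z. pv z \<in> SHullB n (Res C) \<and> zv z \<in> SHullB n (Res C)}"
proof -
  let ?R = "Res C"
  have Cc: "C = {z. pv z \<in> ?R \<and> zv z \<in> ?R}" by (rule C_char[OF lin fr])
  have CE: "C \<subseteq> Evecs n" using lin unfolding E_linear_def by auto
  have RB: "?R \<subseteq> Bvecs n" using CE unfolding Res_def Evecs_def Bvecs_def by auto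
  have sym0: "sympE n z w = 0 \<longleftrightarrow> sympB n (pv z) (pv w) = 0 \<and> sympB n (zv z) (pv w) = 0" for z w
    using E_zero_iff[of "sympE n z w"] unfolding piE_sympE zp_sympE pv_def zv_def by simp
  have RC: "r \<in> ?R \<longleftrightarrow> (\<exists>w\<in>C. r = pv w)" for r unfolding Res_def pv_def by auto
  show ?thesis
  proof (intro equalityI subsetI)
    fix z assume "z \<in> SHullE n C"
    then have zC: "z \<in> C" and ort: "\<forall>w\<in>C. sympE n z w = 0 \<and> sympE n w z = 0"
      unfolding SHullE_def sperpE_def by auto
    have "pv z \<in> ?R" "zv z \<in> ?R" using zC Cc by auto
    moreover have "\<forall>r\<in>?R. sympB n (pv z) r = 0 \<and> sympB n (zv z) r = 0"
    proof
      fix r assume "r \<in> ?R"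
      then obtain w where "w \<in> C" "r = pv w" using RC by blast
      then show "sympB n (pv z) r = 0 \<and> sympB n (zv z) r = 0" using ort sym0 by blast
    qed
    ultimately show "z \<in> {z. pv z \<in> SHullB n ?R \<and> zv z \<in> SHullB n ?R}"
      using RB unfolding SHullB_def sperpB_def by auto
  next
    fix z assume "z \<in> {z. pv z \<in> SHullB n ?R \<and> zv z \<in> SHullB n ?R}"
    then have pR: "pv z \<in> ?R" and zR: "zv z \<in> ?R"
      and po: "\<forall>r\<in>?R. sympB n (pv z) r = 0" and zo: "\<forall>r\<in>?R. sympB n (zv z) r = 0"
      unfolding SHullB_def sperpB_def by auto
    have zC: "z \<in> C" using pR zR Cc by auto
    have zE: "z \<in> Evecs n" using zC CE by auto
    have "sympE n z w = 0 \<and> sympE n w z = 0" if w: "w \<in> C" for w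
    proof -
      have "pv w \<in> ?R" "zv w \<in> ?R" using w Cc by auto
      then show ?thesis unfolding sym0 using po zo sympB_comm by metis
    qed
    then show "z \<in> SHullE n C" using zC zE unfolding SHullE_def sperpE_def by auto
  qed
qed

lemma sub_shull:
  assumes lin: "E_linear n C"
  shows "sub (SHullB n (Res C))" "SHullB n (Res C) \<subseteq> Bvecs n"
proof -
  have CE: "C \<subseteq> Evecs n" and add: "\<And>x y. x \<in> C \<Longrightarrow> y \<in> C \<Longrightarrow> (\<lambda>i. x i + y i) \<in> C"
    and C0: "(\<lambda>i. 0) \<in> C"
    using lin unfolding E_linear_def by auto
  show "SHullB n (Res C) \<subseteq> Bvecs n" unfolding SHullB_def sperpB_def by auto
  have R0: "(\<lambda>i. 0) \<in> Res C"
  proof -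
    have "(\<lambda>i. 0::bit) = (\<lambda>x i. piE (x i)) (\<lambda>i. 0)" by simp
    then show ?thesis unfolding Res_def using C0 by (rule image_eqI)
  qed
  have Radd: "(\<lambda>i. a i + b i) \<in> Res C" if ab: "a \<in> Res C" "b \<in> Res C" for a b
  proof -
    obtain x y where "x \<in> C" "y \<in> C" "a = (\<lambda>i. piE (x i))" "b = (\<lambda>i. piE (y i))"
      using ab unfolding Res_def by blast
    then have "(\<lambda>i. a i + b i) = (\<lambda>i. piE ((\<lambda>i. x i + y i) i))" "(\<lambda>i. x i + y i) \<in> C"
      using add by (simp_all add: piE_add)
    then show ?thesis unfolding Res_def by (metis image_eqI)
  qed
  have B0: "(\<lambda>i. 0::bit) \<in> Bvecs n" unfolding Bvecs_def by simp
  have S0: "sympB n (\<lambda>i. 0) r = 0" for r unfolding sympB_def by simp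
  have Badd: "(\<lambda>i. a i + b i) \<in> Bvecs n" if "a \<in> Bvecs n" "b \<in> Bvecs n" for a b
    using that unfolding Bvecs_def by simp
  show "sub (SHullB n (Res C))"
    unfolding sub_def SHullB_def sperpB_def using R0 Radd B0 S0 Badd sympB_add by simp
qed

theorem mainTheorem17:
  fixes n :: nat and C :: "(nat \<Rightarrow> E) set"
  assumes "E_linear n C" and "free_code n C"
  shows "rankE n (SHullE n C) = dimF2 (SHullB n (Res C))"
  by (rule rank_eq[OF sub_shull[OF assms(1)] shull_char[OF assms]])

end
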